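(* Consider the single-node stochastic clearing problem described in the context, and assume the incremental bid prices $\Delta\alpha_i^{g,+},\Delta\alpha_i^{g,-},\Delta\alpha_j^{d,+},\Delta\alpha_j^{d,-}$ are all positive. Let $(d_j,g_i,D_j(\cdot),G_i(\cdot))$ be an optimal solution with associated prices $(\pi,\Pi(\cdot))$. Then the price distortion $\mathcal{M}^\pi:=\pi-\mathbb{E}[\Pi(\omega)]$ satisfies $$-\Delta\alpha^+\le\mathcal{M}^\pi\le\Delta\alpha^-,$$ where $\Delta\alpha^+=\min\{\min_{i\in\mathcal{G}}\Delta\alpha_i^{g,+},\min_{j\in\mathcal{D}}\Delta\alpha_j^{d,+}\}$ and $\Delta\alpha^-=\min\{\min_{i\in\mathcal{G}}\Delta\alpha_i^{g,-},\min_{j\in\mathcal{D}}\Delta\alpha_j^{d,-}\}$.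
   Context: Finite nonempty sets of suppliers $\mathcal{G}$ and consumers $\mathcal{D}$; a finite scenario set $\Omega$ with probabilities $p(\omega)>0$, $\sum_\omega p(\omega)=1$, and $\mathbb{E}[Y(\omega)]=\sum_\omega p(\omega)Y(\omega)$. Data: bid prices $\alpha_i^g,\alpha_j^d\ge 0$, incremental bid prices $\Delta\alpha_i^{g,\pm},\Delta\alpha_j^{d,\pm}$, real-time capacities $\bar G_i(\omega),\bar D_j(\omega)\ge 0$. $(x)_+=\max\{x,0\}$, $(x)_-=\max\{-x,0\}$. The single-node stochastic clearing problem is: minimize over free day-ahead variables $g_i,d_j\in\mathbb{R}$ and real-time variables $G_i(\omega),D_j(\omega)$ $$\sum_{i\in\mathcal{G}}\mathbb{E}[\alpha_i^gG_i(\omega)+\Delta\alpha_i^{g,+}(G_i(\omega)-g_i)_++\Delta\alpha_i^{g,-}(G_i(\omega)-g_i)_-]+\sum_{j\in\mathcal{D}}\mathbb{E}[-\alpha_j^dD_j(\omega)+\Delta\alpha_j^{d,+}(D_j(\omega)-d_j)_-+\Delta\alpha_j^{d,-}(D_j(\omega)-d_j)_+]$$ subject to $\sum_i g_i=\sum_j d_j$ (multiplier $\pi$), $\sum_i(G_i(\omega)-g_i)=\sum_j(D_j(\omega)-d_j)$ for each $\omega$ (multiplier $p(\omega)\Pi(\omega)$), $0\le G_i(\omega)\le\bar G_i(\omega)$, $0\le D_j(\omega)\le\bar D_j(\omega)$. "Optimal solution with associated prices $(\pi,\Pi(\cdot))$" means the solution minimizes the partial Lagrange function $\text{objective}-\pi(\sum_ig_i-\sum_jd_j)-\mathbb{E}[\Pi(\omega)(\sum_i(G_i(\omega)-g_i)-\sum_j(D_j(\omega)-d_j))]$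 over all $g_i,d_j\in\mathbb{R}$ and all $G_i(\cdot),D_j(\cdot)$ satisfying the bound constraints. *)

theory Defs
  imports "HOL-Analysis.Analysis"
begin

definition pos_part :: "real \<Rightarrow> real" where "pos_part x = max x 0"
definition neg_part :: "real \<Rightarrow> real" where "neg_part x = max (- x) 0"

definition expect :: "'w set \<Rightarrow> ('w \<Rightarrow> real) \<Rightarrow> ('w \<Rightarrow> real) \<Rightarrow> real" where
  "expect Om p Y = (\<Sum>w\<in>Om. p w * Y w)"

text \<open>Objective of the single-node stochastic clearing problem.
  ag, ad: bid prices; dgp, dgm, ddp, ddm: incremental bid prices.\<close>
definition objective ::
  "'g set \<Rightarrow> 'd set \<Rightarrow> 'w set \<Rightarrow> ('w \<Rightarrow> real) \<Rightarrow>
   ('g \<Rightarrow> real) \<Rightarrow> ('g \<Rightarrow> real) \<Rightarrow> ('g \<Rightarrow> real) \<Rightarrow>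
   ('d \<Rightarrow> real) \<Rightarrow> ('d \<Rightarrow> real) \<Rightarrow> ('d \<Rightarrow> real) \<Rightarrow>
   ('g \<Rightarrow> real) \<Rightarrow> ('d \<Rightarrow> real) \<Rightarrow> ('g \<Rightarrow> 'w \<Rightarrow> real) \<Rightarrow> ('d \<Rightarrow> 'w \<Rightarrow> real) \<Rightarrow> real" where
  "objective Gs Ds Om p ag dgp dgm ad ddp ddm g d G D =
     (\<Sum>i\<in>Gs. expect Om p (\<lambda>w. ag i * G i w + dgp i * pos_part (G i w - g i)
                                  + dgm i * neg_part (G i w - g i)))
   + (\<Sum>j\<in>Ds. expect Om p (\<lambda>w. - ad j * D j w + ddp j * neg_part (D j w - d j)
                                  + ddm j * pos_part (D j w - d j)))"

definition lagrangian ::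
  "'g set \<Rightarrow> 'd set \<Rightarrow> 'w set \<Rightarrow> ('w \<Rightarrow> real) \<Rightarrow>
   ('g \<Rightarrow> real) \<Rightarrow> ('g \<Rightarrow> real) \<Rightarrow> ('g \<Rightarrow> real) \<Rightarrow>
   ('d \<Rightarrow> real) \<Rightarrow> ('d \<Rightarrow> real) \<Rightarrow> ('d \<Rightarrow> real) \<Rightarrow> real \<Rightarrow> ('w \<Rightarrow> real) \<Rightarrow>
   ('g \<Rightarrow> real) \<Rightarrow> ('d \<Rightarrow> real) \<Rightarrow> ('g \<Rightarrow> 'w \<Rightarrow> real) \<Rightarrow> ('d \<Rightarrow> 'w \<Rightarrow> real) \<Rightarrow> real" where
  "lagrangian Gs Ds Om p ag dgp dgm ad ddp ddm piDA PiRT g d G D =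
     objective Gs Ds Om p ag dgp dgm ad ddp ddm g d G D
     - piDA * ((\<Sum>i\<in>Gs. g i) - (\<Sum>j\<in>Ds. d j))
     - expect Om p (\<lambda>w. PiRT w * ((\<Sum>i\<in>Gs. G i w - g i) - (\<Sum>j\<in>Ds. D j w - d j)))"

definition bounds_ok ::
  "'g set \<Rightarrow> 'd set \<Rightarrow> 'w set \<Rightarrow> ('g \<Rightarrow> 'w \<Rightarrow> real) \<Rightarrow> ('d \<Rightarrow> 'w \<Rightarrow> real) \<Rightarrow>
   ('g \<Rightarrow> 'w \<Rightarrow> real) \<Rightarrow> ('d \<Rightarrow> 'w \<Rightarrow> real) \<Rightarrow> bool" where
  "bounds_ok Gs Ds Om Gbar Dbar G D \<longleftrightarrow>
     (\<forall>i\<in>Gs. \<forall>w\<in>Om. 0 \<le> G i w \<and> G i w \<le> Gbar i w) \<and>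
     (\<forall>j\<in>Ds. \<forall>w\<in>Om. 0 \<le> D j w \<and> D j w \<le> Dbar j w)"

definition feasible ::
  "'g set \<Rightarrow> 'd set \<Rightarrow> 'w set \<Rightarrow> ('g \<Rightarrow> 'w \<Rightarrow> real) \<Rightarrow> ('d \<Rightarrow> 'w \<Rightarrow> real) \<Rightarrow>
   ('g \<Rightarrow> real) \<Rightarrow> ('d \<Rightarrow> real) \<Rightarrow> ('g \<Rightarrow> 'w \<Rightarrow> real) \<Rightarrow> ('d \<Rightarrow> 'w \<Rightarrow> real) \<Rightarrow> bool" where
  "feasible Gs Ds Om Gbar Dbar g d G D \<longleftrightarrow>
     (\<Sum>i\<in>Gs. g i) = (\<Sum>j\<in>Ds. d j) \<and>
     (\<forall>w\<in>Om. (\<Sum>i\<in>Gs. G i w - g i) = (\<Sum>j\<in>Ds. D j w - d j)) \<and>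
     bounds_ok Gs Ds Om Gbar Dbar G D"

definition optimal_with_prices where
  "optimal_with_prices Gs Ds Om p ag dgp dgm ad ddp ddm Gbar Dbar piDA PiRT g d G D \<longleftrightarrow>
     feasible Gs Ds Om Gbar Dbar g d G D \<and>
     (\<forall>g' d' G' D'. bounds_ok Gs Ds Om Gbar Dbar G' D' \<longrightarrow>
        lagrangian Gs Ds Om p ag dgp dgm ad ddp ddm piDA PiRT g d G D
        \<le> lagrangian Gs Ds Om p ag dgp dgm ad ddp ddm piDA PiRT g' d' G' D')"

end

theory Submission
  imports Defs
begin

lemma sum_upd_lem:
  assumes "finite A" "i \<in> A" "\<forall>k\<in>A. k \<noteq> i \<longrightarrow> f' k = f k"
  shows "sum f' A = sum f A - f i + (f' i :: real)"
proof -
  have "sum f' A = f' i + sum f' (A - {i})" using assms by (simp add: sum.remove)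
  moreover have "sum f A = f i + sum f (A - {i})" using assms by (simp add: sum.remove)
  moreover have "sum f' (A - {i}) = sum f (A - {i})" using assms(3) by (intro sum.cong) auto
  ultimately show ?thesis by simp
qed

lemma expect_shift:
  "expect Om p (\<lambda>w. P w * (S w - t)) = expect Om p (\<lambda>w. P w * S w) - t * expect Om p P"
  unfolding expect_def by (simp add: algebra_simps sum_subtractf sum_distrib_left)

lemma expect_shift2:
  "expect Om p (\<lambda>w. P w * (S w + t)) = expect Om p (\<lambda>w. P w * S w) + t * expect Om p P"
  unfolding expect_def by (simp add: algebra_simps sum.distrib sum_distrib_left)

lemma expect_diff_le:
  assumes "\<forall>w\<in>Om. p w > 0" "(\<Sum>w\<in>Om. p w) = 1" "\<forall>w\<in>Om. F' w - F w \<le> (c::real)"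
  shows "expect Om p F' - expect Om p F \<le> c"
proof -
  have "expect Om p F' - expect Om p F = (\<Sum>w\<in>Om. p w * (F' w - F w))"
    unfolding expect_def by (simp add: algebra_simps sum_subtractf)
  also have "\<dots> \<le> (\<Sum>w\<in>Om. p w * c)"
    using assms by (intro sum_mono mult_left_mono) auto
  also have "\<dots> = c" using assms(2) by (simp add: sum_distrib_right[symmetric])
  finally show ?thesis .
qed

lemma pn_lem1:
  assumes "a > 0" "b > 0"
  shows "(c + b * pos_part (x - 1) + a * neg_part (x - 1)) - (c + b * pos_part x + a * neg_part x) \<le> (a::real)"
proof -
  have "pos_part (x - 1) \<le> pos_part x" "neg_part (x - 1) \<le> neg_part x + 1"
    unfolding pos_part_def neg_part_def by auto
  hence "b * pos_part (x - 1) \<le> b * pos_part x" "a * neg_part (x - 1) \<le> a * (neg_part x + 1)"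
    using assms by (auto intro: mult_left_mono)
  thus ?thesis by (simp add: algebra_simps)
qed

lemma pn_lem2:
  assumes "a > 0" "b > 0"
  shows "(c + b * pos_part (x + 1) + a * neg_part (x + 1)) - (c + b * pos_part x + a * neg_part x) \<le> (b::real)"
proof -
  have "pos_part (x + 1) \<le> pos_part x + 1" "neg_part (x + 1) \<le> neg_part x"
    unfolding pos_part_def neg_part_def by auto
  hence "b * pos_part (x + 1) \<le> b * (pos_part x + 1)" "a * neg_part (x + 1) \<le> a * neg_part x"
    using assms by (auto intro: mult_left_mono)
  thus ?thesis by (simp add: algebra_simps)
qed

theorem theorem2:
  fixes Gs :: "'g set" and Ds :: "'d set" and Om :: "'w set" and p :: "'w \<Rightarrow> real"
    and ag dgp dgm :: "'g \<Rightarrow> real" and ad ddp ddm :: "'d \<Rightarrow> real"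
    and Gbar :: "'g \<Rightarrow> 'w \<Rightarrow> real" and Dbar :: "'d \<Rightarrow> 'w \<Rightarrow> real"
    and piDA :: real and PiRT :: "'w \<Rightarrow> real"
    and g :: "'g \<Rightarrow> real" and d :: "'d \<Rightarrow> real"
    and G :: "'g \<Rightarrow> 'w \<Rightarrow> real" and D :: "'d \<Rightarrow> 'w \<Rightarrow> real"
  assumes "finite Gs" "Gs \<noteq> {}" "finite Ds" "Ds \<noteq> {}" "finite Om" "Om \<noteq> {}"
    and "\<forall>w\<in>Om. p w > 0" and "(\<Sum>w\<in>Om. p w) = 1"
    and "\<forall>i\<in>Gs. ag i \<ge> 0" and "\<forall>j\<in>Ds. ad j \<ge> 0"
    and "\<forall>i\<in>Gs. \<forall>w\<in>Om. Gbar i w \<ge> 0" and "\<forall>j\<in>Ds. \<forall>w\<in>Om. Dbar j w \<ge> 0"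
    and "\<forall>i\<in>Gs. dgp i > 0 \<and> dgm i > 0" and "\<forall>j\<in>Ds. ddp j > 0 \<and> ddm j > 0"
    and "optimal_with_prices Gs Ds Om p ag dgp dgm ad ddp ddm Gbar Dbar piDA PiRT g d G D"
  shows "- min (Min (dgp ` Gs)) (Min (ddp ` Ds)) \<le> piDA - expect Om p PiRT
       \<and> piDA - expect Om p PiRT \<le> min (Min (dgm ` Gs)) (Min (ddm ` Ds))"
proof -
  define M where "M = piDA - expect Om p PiRT"
  define L where "L = lagrangian Gs Ds Om p ag dgp dgm ad ddp ddm piDA PiRT"
  have feas: "bounds_ok Gs Ds Om Gbar Dbar G D"
    using assms(15) unfolding optimal_with_prices_def feasible_def by blast
  have opt: "\<And>g' d'. L g d G D \<le> L g' d' G D"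
    using assms(15) feas unfolding optimal_with_prices_def L_def by blast
  define FG where "FG = (\<lambda>gg i w. ag i * G i w + dgp i * pos_part (G i w - gg i)
                                  + dgm i * neg_part (G i w - gg i))"
  define FD where "FD = (\<lambda>dd j w. - ad j * D j w + ddp j * neg_part (D j w - dd j)
                                  + ddm j * pos_part (D j w - dd j))"
  have Lform: "\<And>g' d'. L g' d' G D = (\<Sum>k\<in>Gs. expect Om p (FG g' k)) + (\<Sum>k\<in>Ds. expect Om p (FD d' k))
      - piDA * ((\<Sum>k\<in>Gs. g' k) - (\<Sum>k\<in>Ds. d' k))
      - expect Om p (\<lambda>w. PiRT w * ((\<Sum>k\<in>Gs. G k w - g' k) - (\<Sum>k\<in>Ds. D k w - d' k)))"
    unfolding L_def lagrangian_def objective_def FG_def FD_def by simp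
  have gen: "0 \<le> expect Om p (FG (g(i := g i + t)) i) - expect Om p (FG g i) - M * t"
    if i: "i \<in> Gs" for i t
  proof -
    let ?g' = "g(i := g i + t)"
    have h1: "(\<Sum>k\<in>Gs. ?g' k) = (\<Sum>k\<in>Gs. g k) - g i + (g i + t)"
      using sum_upd_lem[OF assms(1) i, of ?g' g] by auto
    have h2: "(\<Sum>k\<in>Gs. G k w - ?g' k) = (\<Sum>k\<in>Gs. G k w - g k) - t" for w
      using sum_upd_lem[OF assms(1) i, of "\<lambda>k. G k w - ?g' k" "\<lambda>k. G k w - g k"] by auto
    have h3: "(\<Sum>k\<in>Gs. expect Om p (FG ?g' k)) = (\<Sum>k\<in>Gs. expect Om p (FG g k))
        - expect Om p (FG g i) + expect Om p (FG ?g' i)"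
      by (rule sum_upd_lem[OF assms(1) i]) (auto simp: FG_def)
    have h4: "expect Om p (\<lambda>w. PiRT w * ((\<Sum>k\<in>Gs. G k w - ?g' k) - (\<Sum>k\<in>Ds. D k w - d k)))
       = expect Om p (\<lambda>w. PiRT w * ((\<Sum>k\<in>Gs. G k w - g k) - (\<Sum>k\<in>Ds. D k w - d k))) - t * expect Om p PiRT"
      unfolding h2 expect_def by (simp add: algebra_simps sum_subtractf sum.distrib sum_distrib_left)
    have "L ?g' d G D = L g d G D + expect Om p (FG ?g' i) - expect Om p (FG g i) - M * t"
      unfolding Lform h1 h3 h4 by (simp add: M_def algebra_simps)
    thus ?thesis using opt[of ?g' d] by simp
  qed
  have genD: "0 \<le> expect Om p (FD (d(j := d j + t)) j) - expect Om p (FD d j) + M * t"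
    if j: "j \<in> Ds" for j t
  proof -
    let ?d' = "d(j := d j + t)"
    have h1: "(\<Sum>k\<in>Ds. ?d' k) = (\<Sum>k\<in>Ds. d k) - d j + (d j + t)"
      using sum_upd_lem[OF assms(3) j, of ?d' d] by auto
    have h2: "(\<Sum>k\<in>Ds. D k w - ?d' k) = (\<Sum>k\<in>Ds. D k w - d k) - t" for w
      using sum_upd_lem[OF assms(3) j, of "\<lambda>k. D k w - ?d' k" "\<lambda>k. D k w - d k"] by auto
    have h3: "(\<Sum>k\<in>Ds. expect Om p (FD ?d' k)) = (\<Sum>k\<in>Ds. expect Om p (FD d k))
        - expect Om p (FD d j) + expect Om p (FD ?d' j)"
      by (rule sum_upd_lem[OF assms(3) j]) (auto simp: FD_def)
    have h4: "expect Om p (\<lambda>w. PiRT w * ((\<Sum>k\<in>Gs. G k w - g k) - (\<Sum>k\<in>Ds. D k w - ?d' k)))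
       = expect Om p (\<lambda>w. PiRT w * ((\<Sum>k\<in>Gs. G k w - g k) - (\<Sum>k\<in>Ds. D k w - d k))) + t * expect Om p PiRT"
      unfolding h2 expect_def by (simp add: algebra_simps sum_subtractf sum.distrib sum_distrib_left)
    have "L g ?d' G D = L g d G D + expect Om p (FD ?d' j) - expect Om p (FD d j) + M * t"
      unfolding Lform h1 h3 h4 by (simp add: M_def algebra_simps)
    thus ?thesis using opt[of g ?d'] by simp
  qed
  have g1: "M \<le> dgm i" if i: "i \<in> Gs" for i
  proof -
    have "FG (g(i := g i + 1)) i w - FG g i w \<le> dgm i" for w
    proof -
      have e: "G i w - (g i + 1) = (G i w - g i) - 1" by simp
      show ?thesis unfolding FG_def fun_upd_same e
        using pn_lem1[of "dgm i" "dgp i" "ag i * G i w" "G i w - g i"] assms(13) i by simp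
    qed
    hence "expect Om p (FG (g(i := g i + 1)) i) - expect Om p (FG g i) \<le> dgm i"
      using assms(7,8) by (intro expect_diff_le) auto
    thus ?thesis using gen[OF i, of 1] by simp
  qed
  have g2: "- dgp i \<le> M" if i: "i \<in> Gs" for i
  proof -
    have "FG (g(i := g i + -1)) i w - FG g i w \<le> dgp i" for w
    proof -
      have e: "G i w - (g i + -1) = (G i w - g i) + 1" by simp
      show ?thesis unfolding FG_def fun_upd_same e
        using pn_lem2[of "dgm i" "dgp i" "ag i * G i w" "G i w - g i"] assms(13) i by simp
    qed
    hence "expect Om p (FG (g(i := g i + -1)) i) - expect Om p (FG g i) \<le> dgp i"
      using assms(7,8) by (intro expect_diff_le) auto
    thus ?thesis using gen[OF i, of "-1"] by simp
  qed
  have d1: "- ddp j \<le> M" if j: "j \<in> Ds" for j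
  proof -
    have "FD (d(j := d j + 1)) j w - FD d j w \<le> ddp j" for w
    proof -
      have e: "D j w - (d j + 1) = (D j w - d j) - 1" by simp
      show ?thesis unfolding FD_def fun_upd_same e
        using pn_lem1[of "ddp j" "ddm j" "- ad j * D j w" "D j w - d j"] assms(14) j
        by (simp add: add_ac)
    qed
    hence "expect Om p (FD (d(j := d j + 1)) j) - expect Om p (FD d j) \<le> ddp j"
      using assms(7,8) by (intro expect_diff_le) auto
    thus ?thesis using genD[OF j, of 1] by simp
  qed
  have d2: "M \<le> ddm j" if j: "j \<in> Ds" for j
  proof -
    have "FD (d(j := d j + -1)) j w - FD d j w \<le> ddm j" for w
    proof -
      have e: "D j w - (d j + -1) = (D j w - d j) + 1" by simp
      show ?thesis unfolding FD_def fun_upd_same e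
        using pn_lem2[of "ddp j" "ddm j" "- ad j * D j w" "D j w - d j"] assms(14) j
        by (simp add: add_ac)
    qed
    hence "expect Om p (FD (d(j := d j + -1)) j) - expect Om p (FD d j) \<le> ddm j"
      using assms(7,8) by (intro expect_diff_le) auto
    thus ?thesis using genD[OF j, of "-1"] by simp
  qed
  obtain i0 where i0: "i0 \<in> Gs" "Min (dgp ` Gs) = dgp i0"
  proof -
    have "Min (dgp ` Gs) \<in> dgp ` Gs" using assms(1,2) by (intro Min_in) auto
    thus ?thesis using that by force
  qed
  obtain j0 where j0: "j0 \<in> Ds" "Min (ddp ` Ds) = ddp j0"
  proof -
    have "Min (ddp ` Ds) \<in> ddp ` Ds" using assms(3,4) by (intro Min_in) auto
    thus ?thesis using that by force
  qed
  have A: "- min (Min (dgp ` Gs)) (Min (ddp ` Ds)) \<le> M"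
    using g2[OF i0(1)] d1[OF j0(1)] i0 j0 by linarith
  have B1: "M \<le> Min (dgm ` Gs)" using g1 assms(1,2) by (auto intro: Min.boundedI)
  have B2: "M \<le> Min (ddm ` Ds)" using d2 assms(3,4) by (auto intro: Min.boundedI)
  show ?thesis using A B1 B2 unfolding M_def by simp
qed

end
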